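(* For every sufficiently small fixed $\varepsilon>0$ and $p=n^{-(2/5+\varepsilon)}$, asymptotically almost surely $G\sim\mathbb{G}(n,p)$ does not contain two edge-disjoint $K_4$-tiled subgraphs $H_1,H_2$ with $\phi(H_1)\ge3$, $\phi(H_2)\ge 3$ and $|V(H_1)\cap V(H_2)|\ge 2$, where $\phi(H)=8-5v(H)+2e(H)$.
   Context: A graph is $K_4$-tiled if every edge lies in a copy of $K_4$ and the auxiliary graph whose vertices are the copies of $K_4$ (two adjacent iff they share an edge) is connected. *)

theory Defs
  imports Complex_Main
begin

text \<open>Graphs on vertex set {0..<n} (type nat); an edge is a 2-element set of vertices.
  A subgraph H is represented by its edge set F; its vertex set is the union of its edges.\<close>

definition all_edges :: "nat \<Rightarrow> nat set set" where
  "all_edges n = {e. \<exists>u v. u < n \<and> v < n \<and> u \<noteq> v \<and> e = {u, v}}"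

definition gnp_prob :: "nat \<Rightarrow> real \<Rightarrow> (nat set set \<Rightarrow> bool) \<Rightarrow> real" where
  "gnp_prob n p P = (\<Sum>E\<in>Pow (all_edges n).
      if P E then p ^ card E * (1 - p) ^ (card (all_edges n) - card E) else 0)"

definition gverts :: "nat set set \<Rightarrow> nat set" where
  "gverts F = \<Union>F"

definition k4_copies :: "nat set set \<Rightarrow> nat set set" where
  "k4_copies F = {S. finite S \<and> card S = 4 \<and> (\<forall>u\<in>S. \<forall>v\<in>S. u \<noteq> v \<longrightarrow> {u, v} \<in> F)}"

definition k4_adj :: "nat set set \<Rightarrow> nat set \<Rightarrow> nat set \<Rightarrow> bool" where
  "k4_adj F S T \<longleftrightarrow> S \<in> k4_copies F \<and> T \<in> k4_copies F \<and> S \<noteq> T \<and> card (S \<inter> T) \<ge> 2"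

definition k4_tiled :: "nat set set \<Rightarrow> bool" where
  "k4_tiled F \<longleftrightarrow> (\<forall>e\<in>F. \<exists>S\<in>k4_copies F. e \<subseteq> S)
     \<and> (\<forall>S\<in>k4_copies F. \<forall>T\<in>k4_copies F. (k4_adj F)\<^sup>*\<^sup>* S T)"

definition phi :: "nat set set \<Rightarrow> int" where
  "phi F = 8 - 5 * int (card (gverts F)) + 2 * int (card F)"

definition bad_pair :: "nat set set \<Rightarrow> bool" where
  "bad_pair E \<longleftrightarrow> (\<exists>F1 F2. F1 \<subseteq> E \<and> F2 \<subseteq> E \<and> F1 \<inter> F2 = {}
      \<and> k4_tiled F1 \<and> k4_tiled F2 \<and> phi F1 \<ge> 3 \<and> phi F2 \<ge> 3
      \<and> card (gverts F1 \<inter> gverts F2) \<ge> 2)"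

end

theory Submission
  imports Defs
begin

definition KE :: "nat set set \<Rightarrow> nat set set" where
 "KE X = {e. \<exists>S\<in>X. \<exists>u\<in>S. \<exists>v\<in>S. u \<noteq> v \<and> e = {u,v}}"

lemma cross: "r\<^sup>*\<^sup>* x y \<Longrightarrow> x \<in> X \<Longrightarrow> y \<notin> X \<Longrightarrow> \<exists>a b. r a b \<and> a \<in> X \<and> b \<notin> X"
  by (induction rule: rtranclp.induct) auto

lemma four_split:
  assumes "finite T" "card T = 4" "a \<in> T" "b \<in> T" "a \<noteq> b"
  shows "\<exists>c d. T = {a,b,c,d} \<and> c \<noteq> d \<and> c \<notin> {a,b} \<and> d \<notin> {a,b}"
proof -
  have sub: "{a,b} \<subseteq> T" using assms by blast
  have "card {a,b} = 2" using assms by simp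
  then have "card (T - {a,b}) = 2" using assms(2) sub card_Diff_subset[of "{a,b}" T] by simp
  then obtain c d where cd: "T - {a,b} = {c,d}" "c \<noteq> d" by (meson card_2_iff)
  have "T = {a,b} \<union> (T - {a,b})" using sub by blast
  then have "T = {a,b,c,d}" using cd by auto
  moreover have "c \<notin> {a,b}" "d \<notin> {a,b}" using cd by blast+
  ultimately show ?thesis using cd by blast
qed

lemma KE_single: "distinct [a,b,c,d] \<Longrightarrow> KE {{a,b,c,d}} = {{a,b},{a,c},{a,d},{b,c},{b,d},{c,d}}"
  unfolding KE_def by (auto simp: insert_commute)

lemma KE_insert: "KE (insert T X) = KE {T} \<union> KE X"
  unfolding KE_def by auto

lemma KE_sub: "KE X \<subseteq> Pow (\<Union>X)"
  unfolding KE_def by auto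

lemma finite_KE: "finite (\<Union>X) \<Longrightarrow> finite (KE X)"
  using KE_sub finite_Pow_iff finite_subset by metis

lemma KE_mem_sub: "e \<in> KE X \<Longrightarrow> e \<subseteq> \<Union>X"
  using KE_sub by blast

lemma copy_finite: "S \<in> k4_copies F \<Longrightarrow> finite S"
  unfolding k4_copies_def by auto

lemma copy_card: "S \<in> k4_copies F \<Longrightarrow> card S = 4"
  unfolding k4_copies_def by auto

lemma KE_sub_F: "X \<subseteq> k4_copies F \<Longrightarrow> KE X \<subseteq> F"
  unfolding KE_def k4_copies_def by auto

lemma gverts_KE: assumes "X \<subseteq> k4_copies F" shows "gverts (KE X) = \<Union>X"
proof
  show "gverts (KE X) \<subseteq> \<Union> X" using KE_sub unfolding gverts_def by blast
  show "\<Union> X \<subseteq> gverts (KE X)"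
  proof
    fix u assume "u \<in> \<Union>X"
    then obtain S where S: "S \<in> X" "u \<in> S" by auto
    have "card S = 4" "finite S" using S assms copy_card copy_finite by auto
    then have "card (S - {u}) = 3" using S by simp
    then have "S - {u} \<noteq> {}" by (metis card.empty zero_neq_numeral)
    then obtain v where "v \<in> S" "v \<noteq> u" by auto
    then have "{u,v} \<in> KE X" unfolding KE_def using S by blast
    then show "u \<in> gverts (KE X)" unfolding gverts_def by auto
  qed
qed


lemma two_elems: assumes "card A \<ge> 2" shows "\<exists>a b. a \<in> A \<and> b \<in> A \<and> a \<noteq> b"
proof -
  have fin: "finite A" using assms by (metis card.infinite not_numeral_le_zero)
  have "A \<noteq> {}" using assms by auto
  then obtain a where a: "a \<in> A" by auto
  have "card (A - {a}) \<ge> 1" using assms a fin by simp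
  then have "A - {a} \<noteq> {}" by (metis card.empty not_one_le_zero)
  then obtain b where "b \<in> A - {a}" by auto
  then show ?thesis using a by auto
qed

lemma grow:
  assumes X: "X \<subseteq> k4_copies F" "finite X" and S: "S \<in> X" and T: "T \<in> k4_copies F"
    and adj: "card (S \<inter> T) \<ge> 2"
    and inv: "5 * card (\<Union>X) \<le> 8 + 2 * card (KE X)"
  shows "5 * card (\<Union>(insert T X)) \<le> 8 + 2 * card (KE (insert T X))
       \<and> card (KE (insert T X)) \<le> card (KE X) + 5"
proof -
  let ?W = "\<Union>X"
  have finW: "finite ?W" using X copy_finite by blast
  have finK: "finite (KE X)" using finite_KE finW by blast
  obtain a b where ab: "a \<in> S \<inter> T" "b \<in> S \<inter> T" "a \<noteq> b" using two_elems[OF adj] by blast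
  obtain c d where T4: "T = {a,b,c,d}" "c \<noteq> d" "c \<notin> {a,b}" "d \<notin> {a,b}"
    using four_split[of T a b] ab T copy_finite copy_card by blast
  have dist: "distinct [a,b,c,d]" using T4 ab by auto
  have abK: "{a,b} \<in> KE X" unfolding KE_def using S ab by blast
  define N where "N = {{a,c},{a,d},{b,c},{b,d},{c,d}}"
  have KE': "KE (insert T X) = KE X \<union> N"
    using KE_insert[of T X] KE_single[OF dist] abK T4(1) unfolding N_def by auto
  have U': "\<Union>(insert T X) = ?W \<union> {c,d}" using T4(1) ab S by auto
  have finN: "finite N" unfolding N_def by simp
  have cardN: "card N \<le> 5" 
    using card_length[of "[{a,c},{a,d},{b,c},{b,d},{c,d}]"] unfolding N_def by simp
  have up: "card (KE (insert T X)) \<le> card (KE X) + 5"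
    unfolding KE' using card_Un_le[of "KE X" N] cardN by linarith
  have mono: "card (KE X) \<le> card (KE X \<union> N)" using finK finN by (simp add: card_mono)
  have notK: "e \<notin> KE X" if "x \<in> e" "x \<notin> ?W" for e x using KE_mem_sub that by blast
  have "5 * card (?W \<union> {c,d}) \<le> 8 + 2 * card (KE X \<union> N)"
  proof (cases "c \<in> ?W")
    case cW: True
    show ?thesis
    proof (cases "d \<in> ?W")
      case True
      then have "?W \<union> {c,d} = ?W" using cW by auto
      then show ?thesis using inv mono by simp
    next
      case False
      have U: "?W \<union> {c,d} = insert d ?W" using cW by auto
      have "card (insert d ?W) = card ?W + 1" using False finW by simp
      moreover have "{{a,d},{b,d},{c,d}} \<subseteq> N" unfolding N_def by auto
      moreover have "KE X \<inter> {{a,d},{b,d},{c,d}} = {}" using notK[of d] False by auto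
      moreover have "card {{a,d},{b,d},{c,d}} = 3" using dist by (auto simp: doubleton_eq_iff)
      ultimately have "card (KE X \<union> N) \<ge> card (KE X) + 3"
        using card_mono[of "KE X \<union> N" "KE X \<union> {{a,d},{b,d},{c,d}}"] finK finN
              card_Un_disjoint[of "KE X" "{{a,d},{b,d},{c,d}}"] by auto
      then show ?thesis using inv U \<open>card (insert d ?W) = card ?W + 1\<close> by simp
    qed
  next
    case cW: False
    show ?thesis
    proof (cases "d \<in> ?W")
      case True
      have U: "?W \<union> {c,d} = insert c ?W" using True by auto
      have "card (insert c ?W) = card ?W + 1" using cW finW by simp
      moreover have "{{a,c},{b,c},{c,d}} \<subseteq> N" unfolding N_def by auto
      moreover have "KE X \<inter> {{a,c},{b,c},{c,d}} = {}" using notK[of c] cW by auto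
      moreover have "card {{a,c},{b,c},{c,d}} = 3" using dist by (auto simp: doubleton_eq_iff)
      ultimately have "card (KE X \<union> N) \<ge> card (KE X) + 3"
        using card_mono[of "KE X \<union> N" "KE X \<union> {{a,c},{b,c},{c,d}}"] finK finN
              card_Un_disjoint[of "KE X" "{{a,c},{b,c},{c,d}}"] by auto
      then show ?thesis using inv U \<open>card (insert c ?W) = card ?W + 1\<close> by simp
    next
      case False
      have "card (?W \<union> {c,d}) = card ?W + 2" using cW False finW T4 by simp
      moreover have "KE X \<inter> N = {}" unfolding N_def using notK[of c] notK[of d] cW False by auto
      moreover have "card N = 5" unfolding N_def using dist by (auto simp: doubleton_eq_iff)
      ultimately show ?thesis using inv card_Un_disjoint[of "KE X" N] finK finN by simp
    qed
  qed
  then show ?thesis using up KE' U' by simp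
qed


lemma KE_single_card: assumes "S \<in> k4_copies F" shows "card (KE {S}) = 6"
proof -
  have "card S = 4" "finite S" using assms copy_card copy_finite by auto
  then obtain a b where ab: "a \<in> S" "b \<in> S" "a \<noteq> b" using two_elems[of S] by auto
  obtain c d where T4: "S = {a,b,c,d}" "c \<noteq> d" "c \<notin> {a,b}" "d \<notin> {a,b}"
    using four_split[of S a b] ab \<open>card S = 4\<close> \<open>finite S\<close> by blast
  have dist: "distinct [a,b,c,d]" using T4 ab by auto
  show ?thesis unfolding T4(1) KE_single[OF dist] using dist by (auto simp: doubleton_eq_iff)
qed

lemma tiled_big:
  assumes finF: "finite F" and edges: "\<forall>e\<in>F. \<exists>u v. u \<noteq> v \<and> e = {u,v}"
    and til: "k4_tiled F" and M: "M \<ge> 7" "card F \<ge> M"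
  shows "\<exists>J\<subseteq>F. M \<le> card J \<and> card J \<le> M + 5 \<and> 5 * card (gverts J) \<le> 8 + 2 * card J"
proof -
  let ?C = "k4_copies F"
  have "\<forall>e\<in>F. finite e" using edges by auto
  then have finV: "finite (gverts F)" using finF unfolding gverts_def by blast
  have Csub: "?C \<subseteq> Pow (gverts F)"
  proof
    fix S assume S: "S \<in> ?C"
    have "S = gverts (KE {S})" using gverts_KE[of "{S}" F] S by simp
    also have "\<dots> \<subseteq> gverts F" using KE_sub_F[of "{S}" F] S unfolding gverts_def by auto
    finally show "S \<in> Pow (gverts F)" by simp
  qed
  have finC: "finite ?C" using Csub finV finite_subset by blast
  have FK: "F \<subseteq> KE ?C"
  proof
    fix e assume e: "e \<in> F"
    then obtain S where "S \<in> ?C" "e \<subseteq> S" using til unfolding k4_tiled_def by blast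
    moreover obtain u v where "u \<noteq> v" "e = {u,v}" using edges e by blast
    ultimately show "e \<in> KE ?C" unfolding KE_def by blast
  qed
  have "F \<noteq> {}" using M by auto
  then obtain e0 where "e0 \<in> F" by auto
  then obtain S0 where S0: "S0 \<in> ?C" using til unfolding k4_tiled_def by blast
  define P where "P X \<longleftrightarrow> X \<subseteq> ?C \<and> S0 \<in> X \<and> 5 * card (\<Union>X) \<le> 8 + 2 * card (KE X) \<and> card (KE X) < M" for X
  have P0: "P {S0}" unfolding P_def using S0 KE_single_card[OF S0] copy_card[OF S0] M by simp
  define Q where "Q k \<longleftrightarrow> (\<exists>X. P X \<and> card X = k)" for k
  have Q1: "Q 1" unfolding Q_def using P0 by (intro exI[of _ "{S0}"]) simp
  moreover have Qb: "\<forall>k. Q k \<longrightarrow> k \<le> card ?C"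
  proof (intro allI impI)
    fix k assume "Q k"
    then obtain X where "X \<subseteq> ?C" "card X = k" unfolding Q_def P_def by blast
    then show "k \<le> card ?C" using card_mono[OF finC \<open>X \<subseteq> ?C\<close>] by simp
  qed
  have "\<exists>k. Q k \<and> (\<forall>k'. Q k' \<longrightarrow> k' \<le> k)" by (rule Nat.ex_has_greatest_nat[OF Q1 Qb])
  then obtain k where "Q k" and kmax: "\<forall>k'. Q k' \<longrightarrow> k' \<le> k" by blast
  then obtain X where PX: "P X" and cX: "card X = k" unfolding Q_def by blast
  have XC: "X \<subseteq> ?C" using PX P_def by blast
  have finX: "finite X" using XC finC finite_subset by blast
  have "X \<noteq> ?C"
  proof
    assume "X = ?C"
    have "finite (KE ?C)" using finite_subset[OF KE_sub_F finF] by blast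
    then have "card F \<le> card (KE X)" using card_mono FK \<open>X = ?C\<close> by blast
    then show False using PX M unfolding P_def by simp
  qed
  then obtain T0 where T0: "T0 \<in> ?C" "T0 \<notin> X" using XC by blast
  have "(k4_adj F)\<^sup>*\<^sup>* S0 T0" using til S0 T0 unfolding k4_tiled_def by blast
  then obtain S T where ST: "k4_adj F S T" "S \<in> X" "T \<notin> X"
    using cross[of "k4_adj F" S0 T0 X] PX T0 unfolding P_def by blast
  have T: "T \<in> ?C" and adj: "card (S \<inter> T) \<ge> 2" using ST(1) unfolding k4_adj_def by auto
  let ?Y = "insert T X"
  have G: "5 * card (\<Union>?Y) \<le> 8 + 2 * card (KE ?Y) \<and> card (KE ?Y) \<le> card (KE X) + 5"
    using grow[OF XC finX ST(2) T adj] PX unfolding P_def by blast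
  have "card ?Y = k + 1" using cX finX ST(3) by simp
  then have "\<not> P ?Y"
  proof (intro notI)
    assume "P ?Y"
    then have "Q (k+1)" unfolding Q_def using \<open>card ?Y = k + 1\<close> by blast
    then show False using kmax by fastforce
  qed
  then have big: "card (KE ?Y) \<ge> M" using G XC T PX unfolding P_def by auto
  have YC: "?Y \<subseteq> ?C" using XC T by blast
  show ?thesis
  proof (intro exI[of _ "KE ?Y"] conjI)
    show "KE ?Y \<subseteq> F" using KE_sub_F[OF YC] .
    show "M \<le> card (KE ?Y)" using big .
    show "card (KE ?Y) \<le> M + 5" using G PX unfolding P_def by linarith
    show "5 * card (gverts (KE ?Y)) \<le> 8 + 2 * card (KE ?Y)" using G gverts_KE[OF YC] by simp
  qed
qed


lemma all_edges_sub: "all_edges n \<subseteq> Pow {..<n}"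
  unfolding all_edges_def by auto

lemma finite_all_edges: "finite (all_edges n)"
  using all_edges_sub finite_subset by blast

lemma witness:
  assumes EA: "E \<subseteq> all_edges n" and bad: "bad_pair E" and M: "M \<ge> 7"
  shows "\<exists>J\<subseteq>E. 1 \<le> card J \<and> card J \<le> 2*M+5 \<and>
     ((M \<le> card J \<and> 5*card (gverts J) \<le> 8 + 2*card J) \<or> 5*card (gverts J) \<le> 2*card J)"
proof -
  obtain F1 F2 where F: "F1 \<subseteq> E" "F2 \<subseteq> E" "F1 \<inter> F2 = {}" "k4_tiled F1" "k4_tiled F2"
     "phi F1 \<ge> 3" "phi F2 \<ge> 3" "card (gverts F1 \<inter> gverts F2) \<ge> 2"
    using bad unfolding bad_pair_def by blast
  have finE: "finite E" using EA finite_all_edges finite_subset by blast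
  have edgesE: "\<forall>e\<in>E. \<exists>u v. u \<noteq> v \<and> e = {u,v}" using EA unfolding all_edges_def by blast
  have fin1: "finite F1" and fin2: "finite F2" using F finE finite_subset by blast+
  show ?thesis
  proof (cases "card F1 \<ge> M \<or> card F2 \<ge> M")
    case True
    then obtain F where FF: "F \<subseteq> E" "k4_tiled F" "card F \<ge> M" using F by blast
    then have "finite F" using finE finite_subset by blast
    then obtain J where J: "J \<subseteq> F" "M \<le> card J" "card J \<le> M + 5" "5 * card (gverts J) \<le> 8 + 2 * card J"
      using tiled_big[of F M] FF edgesE M by blast
    show ?thesis using J FF M by (intro exI[of _ J]) auto
  next
    case False
    let ?J = "F1 \<union> F2"
    have cJ: "card ?J = card F1 + card F2" using card_Un_disjoint[OF fin1 fin2 F(3)] .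
    have gv: "gverts ?J = gverts F1 \<union> gverts F2" unfolding gverts_def by auto
    have fe: "\<forall>e\<in>E. finite e" using edgesE by auto
    have fg1: "finite (gverts F1)" using fin1 fe F(1) unfolding gverts_def by blast
    have fg2: "finite (gverts F2)" using fin2 fe F(2) unfolding gverts_def by blast
    have cu: "card (gverts F1 \<union> gverts F2) + card (gverts F1 \<inter> gverts F2) = card (gverts F1) + card (gverts F2)"
      using card_Un_Int[OF fg1 fg2] by simp
    have p1: "5 * card (gverts F1) \<le> 5 + 2 * card F1" using F(6) unfolding phi_def by linarith
    have p2: "5 * card (gverts F2) \<le> 5 + 2 * card F2" using F(7) unfolding phi_def by linarith
    have "gverts F1 \<noteq> {}" using F(8) by auto
    then have "F1 \<noteq> {}" unfolding gverts_def by auto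
    then have "card F1 \<ge> 1" using fin1 by (simp add: Suc_le_eq card_gt_0_iff)
    then have "1 \<le> card ?J" using cJ by simp
    moreover have "card ?J \<le> 2*M+5" using cJ False by simp
    moreover have "5*card (gverts ?J) \<le> 2*card ?J" using gv cu p1 p2 cJ F(8) by simp
    ultimately show ?thesis using F by (intro exI[of _ ?J]) auto
  qed
qed


lemma subset_sum_weight:
  fixes p :: real
  assumes fin: "finite A" and JA: "J \<subseteq> A"
  shows "(\<Sum>E\<in>Pow A. if J \<subseteq> E then p ^ card E * (1 - p) ^ (card A - card E) else 0) = p ^ card J"
proof -
  let ?B = "A - J"
  let ?w = "\<lambda>E. p ^ card E * (1 - p) ^ (card A - card E)"
  have finJ: "finite J" using fin JA finite_subset by blast
  have finB: "finite ?B" using fin by simp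
  have one: "(\<Sum>D\<in>Pow ?B. p ^ card D * (1 - p) ^ card (?B - D)) = 1"
  proof -
    have "(\<Prod>x\<in>?B. p + (1 - p)) = (\<Sum>D\<in>Pow ?B. (\<Prod>x\<in>D. p) * (\<Prod>x\<in>?B - D. 1 - p))"
      by (rule prod_add[OF finB])
    then show ?thesis by simp
  qed
  have "(\<Sum>E\<in>Pow A. if J \<subseteq> E then ?w E else 0) = (\<Sum>E\<in>{E\<in>Pow A. J \<subseteq> E}. ?w E)"
    using sum.inter_filter[of "Pow A" ?w "\<lambda>E. J \<subseteq> E"] fin by simp
  also have "{E\<in>Pow A. J \<subseteq> E} = (\<lambda>D. J \<union> D) ` Pow ?B"
  proof
    show "{E\<in>Pow A. J \<subseteq> E} \<subseteq> (\<lambda>D. J \<union> D) ` Pow ?B"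
    proof
      fix E assume "E \<in> {E\<in>Pow A. J \<subseteq> E}"
      then have "E = J \<union> (E - J)" "E - J \<in> Pow ?B" by auto
      then show "E \<in> (\<lambda>D. J \<union> D) ` Pow ?B" by blast
    qed
    show "(\<lambda>D. J \<union> D) ` Pow ?B \<subseteq> {E\<in>Pow A. J \<subseteq> E}" using JA by blast
  qed
  also have "(\<Sum>E\<in>(\<lambda>D. J \<union> D) ` Pow ?B. ?w E) = (\<Sum>D\<in>Pow ?B. ?w (J \<union> D))"
  proof (rule sum.reindex[unfolded comp_def])
    show "inj_on (\<lambda>D. J \<union> D) (Pow ?B)" by (auto simp: inj_on_def)
  qed
  also have "\<dots> = (\<Sum>D\<in>Pow ?B. p ^ card J * (p ^ card D * (1 - p) ^ card (?B - D)))"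
  proof (rule sum.cong[OF refl])
    fix D assume D: "D \<in> Pow ?B"
    have finD: "finite D" using D finB finite_subset by blast
    have c1: "card (J \<union> D) = card J + card D" using D finJ finD by (subst card_Un_disjoint) auto
    have cA: "card A = card J + card ?B" using card_Diff_subset[OF finJ JA] card_mono[OF fin JA] by simp
    have c2: "card (?B - D) = card ?B - card D" using D finD by (simp add: card_Diff_subset)
    show "?w (J \<union> D) = p ^ card J * (p ^ card D * (1 - p) ^ card (?B - D))"
      using c1 cA c2 by (simp add: power_add)
  qed
  also have "\<dots> = p ^ card J" using one by (simp add: sum_distrib_left[symmetric])
  finally show ?thesis .
qed

lemma weight_nonneg: "0 \<le> (p::real) \<Longrightarrow> p \<le> 1 \<Longrightarrow> 0 \<le> p ^ a * (1 - p) ^ b"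
  by (intro mult_nonneg_nonneg zero_le_power) auto

lemma gnp_nonneg: "0 \<le> (p::real) \<Longrightarrow> p \<le> 1 \<Longrightarrow> 0 \<le> gnp_prob n p P"
  unfolding gnp_prob_def by (intro sum_nonneg) (simp add: weight_nonneg)

lemma union_bound:
  fixes p :: real
  assumes p: "0 \<le> p" "p \<le> 1" and finJ: "finite \<J>" and JA: "\<J> \<subseteq> Pow (all_edges n)"
    and cov: "\<And>E. E \<subseteq> all_edges n \<Longrightarrow> P E \<Longrightarrow> \<exists>J\<in>\<J>. J \<subseteq> E"
  shows "gnp_prob n p P \<le> (\<Sum>J\<in>\<J>. p ^ card J)"
proof -
  let ?A = "all_edges n"
  let ?w = "\<lambda>E. p ^ card E * (1 - p) ^ (card ?A - card E)"
  have fin: "finite ?A" by (rule finite_all_edges)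
  have "gnp_prob n p P \<le> (\<Sum>E\<in>Pow ?A. \<Sum>J\<in>\<J>. if J \<subseteq> E then ?w E else 0)"
    unfolding gnp_prob_def
  proof (rule sum_mono)
    fix E assume E: "E \<in> Pow ?A"
    show "(if P E then ?w E else 0) \<le> (\<Sum>J\<in>\<J>. if J \<subseteq> E then ?w E else 0)"
    proof (cases "P E")
      case True
      then obtain J where J: "J \<in> \<J>" "J \<subseteq> E" using cov E by blast
      have "?w E = (if J \<subseteq> E then ?w E else 0)" using J by simp
      also have "\<dots> \<le> (\<Sum>J\<in>\<J>. if J \<subseteq> E then ?w E else 0)"
        by (rule member_le_sum[OF J(1) _ finJ]) (simp add: weight_nonneg p)
      finally show ?thesis using True by simp
    next
      case False
      then show ?thesis using p by (simp add: sum_nonneg weight_nonneg)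
    qed
  qed
  also have "\<dots> = (\<Sum>J\<in>\<J>. \<Sum>E\<in>Pow ?A. if J \<subseteq> E then ?w E else 0)"
    by (rule sum.swap)
  also have "\<dots> = (\<Sum>J\<in>\<J>. p ^ card J)"
  proof (rule sum.cong[OF refl])
    fix J assume "J \<in> \<J>"
    then have "J \<subseteq> ?A" using JA by blast
    then show "(\<Sum>E\<in>Pow ?A. if J \<subseteq> E then ?w E else 0) = p ^ card J"
      by (rule subset_sum_weight[OF fin])
  qed
  finally show ?thesis .
qed


lemma gverts_card: assumes "J \<subseteq> all_edges n" shows "card (gverts J) \<le> 2 * card J"
proof -
  have "card (gverts J) \<le> sum card J" unfolding gverts_def by (rule card_Union_le_sum_card)
  also have "sum card J = sum (\<lambda>_. 2) J"
  proof (rule sum.cong[OF refl])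
    fix e assume "e \<in> J"
    then obtain u v where "u \<noteq> v" "e = {u,v}" using assms unfolding all_edges_def by blast
    then show "card e = 2" by simp
  qed
  finally show ?thesis by simp
qed

lemma count_layer:
  fixes n v :: nat
  assumes "\<J> \<subseteq> Pow (all_edges n)"
  shows "card {J\<in>\<J>. card (gverts J) = v} \<le> n ^ v * 2 ^ (2 ^ v)"
proof -
  define S where "S = {V. V \<subseteq> {..<n} \<and> card V = v}"
  have finS: "finite S" unfolding S_def by (rule finite_subset[of _ "Pow {..<n}"]) auto
  have cS: "card S = n choose v" unfolding S_def using n_subsets[of "{..<n}" v] by simp
  have cS2: "card S \<le> n ^ v"
  proof (cases "v \<le> n")
    case True then show ?thesis using cS binomial_le_pow by simp
  next
    case False then show ?thesis using cS binomial_eq_0[of n v] by simp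
  qed
  let ?Sig = "SIGMA V:S. Pow (Pow V)"
  have finV: "\<forall>V\<in>S. finite V" unfolding S_def using finite_subset by blast
  have finSig: "finite ?Sig" using finS finV by auto
  have cSig: "card ?Sig = card S * 2 ^ (2 ^ v)"
  proof -
    have fP: "\<forall>V\<in>S. finite (Pow (Pow V))" using finV by simp
    have "card ?Sig = (\<Sum>V\<in>S. card (Pow (Pow V)))" by (rule card_SigmaI[OF finS fP])
    also have "\<dots> = (\<Sum>V\<in>S. 2 ^ (2 ^ v))"
    proof (rule sum.cong[OF refl])
      fix V assume "V \<in> S"
      then have fV: "finite V" using finV by blast
      have cV: "card V = v" using \<open>V \<in> S\<close> unfolding S_def by blast
      have "card (Pow (Pow V)) = 2 ^ card (Pow V)" using fV by (intro card_Pow) simp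
      also have "card (Pow V) = 2 ^ card V" using fV by (rule card_Pow)
      finally show "card (Pow (Pow V)) = 2 ^ (2 ^ v)" using cV by simp
    qed
    also have "\<dots> = card S * 2 ^ (2 ^ v)" using sum_constant[of "2 ^ (2 ^ v)" S] by simp
    finally show ?thesis .
  qed
  have "card {J\<in>\<J>. card (gverts J) = v} \<le> card ?Sig"
  proof (rule card_inj_on_le[of "\<lambda>J. (gverts J, J)"])
    show "inj_on (\<lambda>J. (gverts J, J)) {J\<in>\<J>. card (gverts J) = v}" by (auto simp: inj_on_def)
    show "(\<lambda>J. (gverts J, J)) ` {J\<in>\<J>. card (gverts J) = v} \<subseteq> ?Sig"
    proof
      fix x assume "x \<in> (\<lambda>J. (gverts J, J)) ` {J\<in>\<J>. card (gverts J) = v}"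
      then obtain J where J: "J \<in> \<J>" "card (gverts J) = v" "x = (gverts J, J)" by blast
      have "J \<subseteq> all_edges n" using J assms by blast
      then have "gverts J \<subseteq> {..<n}" using all_edges_sub unfolding gverts_def by blast
      then have "gverts J \<in> S" unfolding S_def using J by blast
      moreover have "J \<in> Pow (Pow (gverts J))" unfolding gverts_def by blast
      ultimately show "x \<in> ?Sig" using J by blast
    qed
    show "finite ?Sig" by (rule finSig)
  qed
  also have "\<dots> \<le> n ^ v * 2 ^ (2 ^ v)" using cSig cS2 by simp
  finally show ?thesis .
qed

lemma count_bound:
  fixes n K :: nat and c \<delta> :: real
  assumes n: "n \<ge> 1" and JJ: "\<J> \<subseteq> Pow (all_edges n)"
    and small: "\<And>J. J \<in> \<J> \<Longrightarrow> card J \<le> K"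
    and heavy: "\<And>J. J \<in> \<J> \<Longrightarrow> real (card (gverts J)) - c * real (card J) \<le> -\<delta>"
  shows "(\<Sum>J\<in>\<J>. (real n powr (-c)) ^ card J) \<le> (\<Sum>v\<le>2*K. 2^(2^v)) * real n powr (-\<delta>)"
proof -
  have finJ: "finite \<J>" using JJ finite_all_edges finite_subset by blast
  have n1: "1 \<le> real n" using n by simp
  let ?g = "\<lambda>J. card (gverts J)"
  have "(\<Sum>J\<in>\<J>. (real n powr (-c)) ^ card J) \<le> (\<Sum>J\<in>\<J>. real n powr (-\<delta> - real (?g J)))"
  proof (rule sum_mono)
    fix J assume J: "J \<in> \<J>"
    have "(real n powr (-c)) ^ card J = real n powr (real (card J) * (-c))"
      by (rule powr_power) (use n in auto)
    also have "\<dots> \<le> real n powr (-\<delta> - real (?g J))"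
    proof (rule powr_mono[OF _ n1])
      have "real (card J) * (-c) = - (c * real (card J))" by simp
      then show "real (card J) * (-c) \<le> -\<delta> - real (?g J)" using heavy[OF J] by linarith
    qed
    finally show "(real n powr (-c)) ^ card J \<le> real n powr (-\<delta> - real (?g J))" .
  qed
  also have "\<dots> = (\<Sum>v\<le>2*K. \<Sum>J\<in>{J\<in>\<J>. ?g J = v}. real n powr (-\<delta> - real (?g J)))"
  proof (rule sum.group[symmetric, OF finJ])
    show "finite {..2*K}" by simp
    show "?g ` \<J> \<subseteq> {..2*K}"
    proof
      fix x assume "x \<in> ?g ` \<J>"
      then obtain J where J: "J \<in> \<J>" "x = ?g J" by blast
      then have "?g J \<le> 2 * card J" using gverts_card[of J n] JJ by blast
      then show "x \<in> {..2*K}" using small[OF J(1)] J by simp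
    qed
  qed
  also have "\<dots> = (\<Sum>v\<le>2*K. real (card {J\<in>\<J>. ?g J = v}) * real n powr (-\<delta> - real v))"
  proof (rule sum.cong[OF refl])
    fix v
    have "(\<Sum>J\<in>{J\<in>\<J>. ?g J = v}. real n powr (-\<delta> - real (?g J)))
        = (\<Sum>J\<in>{J\<in>\<J>. ?g J = v}. real n powr (-\<delta> - real v))" by (rule sum.cong) auto
    then show "(\<Sum>J\<in>{J\<in>\<J>. ?g J = v}. real n powr (-\<delta> - real (?g J)))
        = real (card {J\<in>\<J>. ?g J = v}) * real n powr (-\<delta> - real v)" by simp
  qed
  also have "\<dots> \<le> (\<Sum>v\<le>2*K. 2^(2^v) * real n powr (-\<delta>))"
  proof (rule sum_mono)
    fix v
    have c: "real (card {J\<in>\<J>. ?g J = v}) \<le> real n ^ v * 2 ^ (2 ^ v)"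
    proof -
      have "card {J\<in>\<J>. ?g J = v} \<le> n ^ v * 2 ^ (2 ^ v)" by (rule count_layer[OF JJ])
      then have "real (card {J\<in>\<J>. ?g J = v}) \<le> real (n ^ v * 2 ^ (2 ^ v))" by (simp only: of_nat_le_iff)
      then show ?thesis by simp
    qed
    have e: "real n ^ v * real n powr (-\<delta> - real v) = real n powr (-\<delta>)"
    proof -
      have "real n ^ v = real n powr real v" using n by (simp add: powr_realpow)
      moreover have "real n powr real v * real n powr (-\<delta> - real v) = real n powr (real v + (-\<delta> - real v))"
        by (rule powr_add[symmetric])
      ultimately show ?thesis by simp
    qed
    have "real (card {J\<in>\<J>. ?g J = v}) * real n powr (-\<delta> - real v)
        \<le> (real n ^ v * 2 ^ (2 ^ v)) * real n powr (-\<delta> - real v)"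
      by (rule mult_right_mono[OF c]) simp
    also have "\<dots> = 2^(2^v) * (real n ^ v * real n powr (-\<delta> - real v))" by (simp only: mult_ac)
    also have "\<dots> = 2^(2^v) * real n powr (-\<delta>)" by (simp only: e)
    finally show "real (card {J\<in>\<J>. ?g J = v}) * real n powr (-\<delta> - real v) \<le> 2^(2^v) * real n powr (-\<delta>)" .
  qed
  also have "\<dots> = (\<Sum>v\<le>2*K. 2^(2^v)) * real n powr (-\<delta>)" by (simp add: sum_distrib_right)
  finally show ?thesis .
qed


theorem claim7p6:
  shows "\<exists>\<epsilon>0>0. \<forall>\<epsilon>::real. 0 < \<epsilon> \<and> \<epsilon> < \<epsilon>0 \<longrightarrow>
     (\<lambda>n. gnp_prob n (real n powr (-(2/5 + \<epsilon>))) bad_pair) \<longlonglongrightarrow> 0"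
proof (intro exI[of _ 1] conjI allI impI)
  show "(0::real) < 1" by simp
  fix \<epsilon> :: real assume \<epsilon>: "0 < \<epsilon> \<and> \<epsilon> < 1"
  define M where "M = nat \<lceil>3/\<epsilon>\<rceil> + 7"
  define K where "K = 2*M+5"
  define \<delta> where "\<delta> = min 1 \<epsilon>"
  define C where "C = (\<Sum>v\<le>2*K. 2^(2^v) :: real)"
  have M7: "M \<ge> 7" unfolding M_def by simp
  have "real M \<ge> 3/\<epsilon>"
  proof -
    have "3/\<epsilon> \<le> real_of_int \<lceil>3/\<epsilon>\<rceil>" by (rule le_of_int_ceiling)
    also have "\<dots> \<le> real (nat \<lceil>3/\<epsilon>\<rceil>)" by simp
    also have "\<dots> \<le> real M" unfolding M_def by simp
    finally show ?thesis .
  qed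
  then have eM: "\<epsilon> * real M \<ge> 3" using \<epsilon> by (simp add: field_simps)
  have dpos: "\<delta> > 0" unfolding \<delta>_def using \<epsilon> by simp
  have pb: "0 \<le> real n powr (-(2/5 + \<epsilon>)) \<and> real n powr (-(2/5 + \<epsilon>)) \<le> 1" if n: "n \<ge> 1" for n :: nat
  proof -
    have n1: "1 \<le> real n" using n by simp
    have "real n powr (-(2/5 + \<epsilon>)) \<le> real n powr 0" by (rule powr_mono[OF _ n1]) (use \<epsilon> in simp)
    then show ?thesis using n by simp
  qed
  have bound: "gnp_prob n (real n powr (-(2/5 + \<epsilon>))) bad_pair \<le> C * real n powr (-\<delta>)"
    if n: "n \<ge> 1" for n :: nat
  proof -
    let ?p = "real n powr (-(2/5 + \<epsilon>))"
    define \<J> where "\<J> = {J. J \<subseteq> all_edges n \<and> card J \<le> K \<and>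
        real (card (gverts J)) - (2/5 + \<epsilon>) * real (card J) \<le> -\<delta>}"
    have n1: "1 \<le> real n" using n by simp
    have p0: "0 \<le> ?p" and p1: "?p \<le> 1" using pb[OF n] by auto
    have JJ: "\<J> \<subseteq> Pow (all_edges n)" unfolding \<J>_def by blast
    have finJ: "finite \<J>" using JJ finite_all_edges finite_subset by blast
    have cov: "\<exists>J\<in>\<J>. J \<subseteq> E" if E: "E \<subseteq> all_edges n" "bad_pair E" for E
    proof -
      obtain J where J: "J \<subseteq> E" "1 \<le> card J" "card J \<le> 2*M+5"
        "(M \<le> card J \<and> 5*card (gverts J) \<le> 8 + 2*card J) \<or> 5*card (gverts J) \<le> 2*card J"
        using witness[OF E M7] by blast
      let ?v = "real (card (gverts J))" and ?e = "real (card J)"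
      have split: "(2/5 + \<epsilon>) * ?e = 2/5 * ?e + \<epsilon> * ?e" by (simp add: algebra_simps)
      have "?v - (2/5 + \<epsilon>) * ?e \<le> -\<delta>"
      proof (cases "M \<le> card J \<and> 5*card (gverts J) \<le> 8 + 2*card J")
        case True
        then have "real (5*card (gverts J)) \<le> real (8 + 2*card J)" by (simp only: of_nat_le_iff)
        then have a: "5 * ?v \<le> 8 + 2 * ?e" by simp
        have "\<epsilon> * real M \<le> \<epsilon> * ?e" using True \<epsilon> by (intro mult_left_mono) auto
        then show ?thesis using a split eM \<epsilon> unfolding \<delta>_def by linarith
      next
        case False
        then have "5*card (gverts J) \<le> 2*card J" using J(4) by blast
        then have "real (5*card (gverts J)) \<le> real (2*card J)" by (simp only: of_nat_le_iff)
        then have a: "5 * ?v \<le> 2 * ?e" by simp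
        have "\<epsilon> * 1 \<le> \<epsilon> * ?e" using J(2) \<epsilon> by (intro mult_left_mono) auto
        then show ?thesis using a split \<epsilon> unfolding \<delta>_def by linarith
      qed
      moreover have "J \<subseteq> all_edges n" using J(1) E(1) by blast
      ultimately have "J \<in> \<J>" unfolding \<J>_def K_def using J(3) by blast
      then show ?thesis using J(1) by blast
    qed
    have "gnp_prob n ?p bad_pair \<le> (\<Sum>J\<in>\<J>. ?p ^ card J)"
      by (rule union_bound[OF p0 p1 finJ JJ cov])
    also have "\<dots> \<le> C * real n powr (-\<delta>)" unfolding C_def
      by (rule count_bound[OF n JJ]) (auto simp: \<J>_def)
    finally show ?thesis .
  qed
  have lim: "(\<lambda>n. C * real n powr (-\<delta>)) \<longlonglongrightarrow> 0"
    by (rule tendsto_mult_right_zero, rule tendsto_neg_powr) (use dpos filterlim_real_sequentially in auto)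
  show "(\<lambda>n. gnp_prob n (real n powr (-(2/5 + \<epsilon>))) bad_pair) \<longlonglongrightarrow> 0"
  proof (rule tendsto_sandwich[OF _ _ tendsto_const lim])
    show "\<forall>\<^sub>F n in sequentially. 0 \<le> gnp_prob n (real n powr (-(2/5 + \<epsilon>))) bad_pair"
      using eventually_ge_at_top[of 1] by eventually_elim (use pb gnp_nonneg in blast)
    show "\<forall>\<^sub>F n in sequentially. gnp_prob n (real n powr (-(2/5 + \<epsilon>))) bad_pair \<le> C * real n powr (-\<delta>)"
      using eventually_ge_at_top[of 1] by eventually_elim (rule bound)
  qed
qed


end
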